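(* Consider a fair division instance with $n$ agents, $m$ divisible goods, additive valuations $v_i(g)$ and generalized assignment constraints with sizes $s_{i,g}$ and budgets $B_i$. Let $\gamma>0$ satisfy: (1) $\gamma\le 1/2$; (2) $\gamma<\min_{i,h\in[n],g\in[m]} v_i(g)/v_h(g)$; (3) if the set $\{(i,h,g,g'):\rho_i(g')>\rho_i(g)\}$ is nonempty, then $\gamma<\frac12\min_{i,h\in[n],\,g,g'\in[m],\,\rho_i(g')>\rho_i(g)}\frac{v_i(g')-v_i(g)\,s_{i,g'}/s_{i,g}}{v_h(g')}$. Let $w\in\mathbb{R}_+^n$ have all components positive and let $x=(x_1,\dots,x_n)$ be a feasible allocation maximizing $\sum_{i=1}^n w_i v_i(x_i)$ over all feasible allocations. If $i,h\in[n]$ are agents with $w_h\le\gamma w_i$, then agent $i$ does not envy agent $h$ under $x$.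
   Context: An allocation is $x=(x_1,\dots,x_n)$ with $x_i\in[0,1]^m$ and $\sum_i x_{i,g}\le1$ for each good $g$. Additive valuations: $v_i(y)=\sum_g y_g v_i(g)$ with $v_i(g)\ge0$ the value of the whole good $g$ to $i$. Generalized assignment constraints: bundle $y$ is feasible for $i$ iff $\sum_g s_{i,g}y_g\le B_i$; an allocation is feasible if each $x_i$ is feasible for $i$. The density of good $g$ for agent $i$ is $\rho_i(g)=v_i(g)/s_{i,g}$. Agent $i$ envies agent $h$ in $x$ if some bundle $y\le x_h$ (componentwise) feasible for $i$ has $v_i(y)>v_i(x_i)$. *)

theory Defs
  imports Complex_Main
begin

(* Agents are elements of a finite type 'a, goods elements of a finite type 'g.
   v i g : value of the whole good g to agent i; s i g : size of g for agent i;
   B i : budget of agent i. *)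

definition val :: "('a \<Rightarrow> 'g::finite \<Rightarrow> real) \<Rightarrow> 'a \<Rightarrow> ('g \<Rightarrow> real) \<Rightarrow> real" where
  "val v i y = (\<Sum>g\<in>UNIV. y g * v i g)"

definition density :: "('a \<Rightarrow> 'g \<Rightarrow> real) \<Rightarrow> ('a \<Rightarrow> 'g \<Rightarrow> real) \<Rightarrow> 'a \<Rightarrow> 'g \<Rightarrow> real" where
  "density v s i g = v i g / s i g"

definition feasible_bundle :: "('a \<Rightarrow> 'g::finite \<Rightarrow> real) \<Rightarrow> ('a \<Rightarrow> real) \<Rightarrow> 'a \<Rightarrow> ('g \<Rightarrow> real) \<Rightarrow> bool" where
  "feasible_bundle s B i y \<longleftrightarrow> (\<forall>g. 0 \<le> y g \<and> y g \<le> 1) \<and> (\<Sum>g\<in>UNIV. s i g * y g) \<le> B i"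

definition is_allocation :: "('a::finite \<Rightarrow> 'g \<Rightarrow> real) \<Rightarrow> bool" where
  "is_allocation x \<longleftrightarrow> (\<forall>i g. 0 \<le> x i g \<and> x i g \<le> 1) \<and> (\<forall>g. (\<Sum>i\<in>UNIV. x i g) \<le> 1)"

definition feasible_allocation :: "('a::finite \<Rightarrow> 'g::finite \<Rightarrow> real) \<Rightarrow> ('a \<Rightarrow> real) \<Rightarrow> ('a \<Rightarrow> 'g \<Rightarrow> real) \<Rightarrow> bool" where
  "feasible_allocation s B x \<longleftrightarrow> is_allocation x \<and> (\<forall>i. feasible_bundle s B i (x i))"

definition envies :: "('a \<Rightarrow> 'g::finite \<Rightarrow> real) \<Rightarrow> ('a \<Rightarrow> 'g \<Rightarrow> real) \<Rightarrow> ('a \<Rightarrow> real)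
    \<Rightarrow> ('a \<Rightarrow> 'g \<Rightarrow> real) \<Rightarrow> 'a \<Rightarrow> 'a \<Rightarrow> bool" where
  "envies v s B x i h \<longleftrightarrow>
     (\<exists>y. (\<forall>g. y g \<le> x h g) \<and> feasible_bundle s B i y \<and> val v i y > val v i (x i))"

end

theory Submission
  imports Defs
begin

lemma perturb:
  fixes v s :: "'a::finite \<Rightarrow> 'g::finite \<Rightarrow> real"
    and B w :: "'a \<Rightarrow> real" and x a :: _ and c :: real
  assumes s_pos: "\<forall>i g. 0 < s i g"
    and x_feas: "feasible_allocation s B x"
    and x_opt: "\<forall>x'. feasible_allocation s B x' \<longrightarrow>
                  (\<Sum>j\<in>UNIV. w j * val v j (x' j)) \<le> (\<Sum>j\<in>UNIV. w j * val v j (x j))"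
    and ih: "i \<noteq> h"
    and a0: "\<forall>g. 0 \<le> a g" and ax: "\<forall>g. a g \<le> x i g"
    and c0: "0 \<le> c" and cx: "c \<le> x h g'"
    and bud: "(\<Sum>g\<in>UNIV. s i g * (x i g - a g)) + s i g' * c \<le> B i"
  shows "w i * (c * v i g' - (\<Sum>g\<in>UNIV. a g * v i g)) - w h * (c * v h g') \<le> 0"
proof -
  define e :: "'g \<Rightarrow> real" where "e = (\<lambda>g. if g = g' then c else 0)"
  define x' where "x' = (\<lambda>j g. if j = i then x i g - a g + e g
       else if j = h then x h g - e g else x j g)"
  have xa: "is_allocation x" and xb: "\<forall>j. feasible_bundle s B j (x j)"
    using x_feas unfolding feasible_allocation_def by auto
  have nn: "\<forall>j g. 0 \<le> x' j g"
    using xa a0 ax c0 cx unfolding x'_def e_def is_allocation_def by (auto)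
  have col: "(\<Sum>j\<in>UNIV. x' j g) = (\<Sum>j\<in>UNIV. x j g) - a g" for g
  proof -
    have "(\<Sum>j\<in>UNIV. x' j g) = (\<Sum>j\<in>UNIV. x j g + (if j = i then e g - a g else 0)
             - (if j = h then e g else 0))"
      by (rule sum.cong) (auto simp: x'_def ih)
    also have "\<dots> = (\<Sum>j\<in>UNIV. x j g) - a g"
      by (simp add: sum.distrib sum_subtractf)
    finally show ?thesis .
  qed
  have colle: "(\<Sum>j\<in>UNIV. x' j g) \<le> 1" for g
  proof -
    have "(\<Sum>j\<in>UNIV. x j g) \<le> 1" "0 \<le> a g" using xa a0 unfolding is_allocation_def by auto
    then show ?thesis using col[of g] by linarith
  qed
  have le1: "x' j g \<le> 1" for j g
  proof -
    have "x' j g \<le> (\<Sum>j\<in>UNIV. x' j g)"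
      by (rule member_le_sum) (auto simp: nn)
    then show ?thesis using colle[of g] by linarith
  qed
  have alloc: "is_allocation x'" using nn le1 colle unfolding is_allocation_def by auto
  have xi: "x' i g = x i g - a g + e g" for g by (simp add: x'_def)
  have xh: "x' h g = x h g - e g" for g using ih by (simp add: x'_def)
  have se: "(\<Sum>g\<in>UNIV. f g * e g) = f g' * c" for f :: "'g \<Rightarrow> real"
  proof -
    have "(\<Sum>g\<in>UNIV. f g * e g) = (\<Sum>g\<in>UNIV. if g = g' then f g' * c else 0)"
      by (rule sum.cong) (auto simp: e_def)
    then show ?thesis by simp
  qed
  have se2: "(\<Sum>g\<in>UNIV. e g * f g) = c * f g'" for f :: "'g \<Rightarrow> real"
    using se[of f] by (simp add: mult.commute)
  have sumi: "(\<Sum>g\<in>UNIV. s i g * x' i g) = (\<Sum>g\<in>UNIV. s i g * (x i g - a g)) + s i g' * c"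
    by (simp add: xi distrib_left sum.distrib se)
  have sumh: "(\<Sum>g\<in>UNIV. s h g * x' h g) = (\<Sum>g\<in>UNIV. s h g * x h g) - s h g' * c"
    by (simp add: xh right_diff_distrib sum_subtractf se)
  have fb: "feasible_bundle s B j (x' j)" for j
  proof -
    have "(\<Sum>g\<in>UNIV. s j g * x' j g) \<le> B j"
    proof (cases "j = i")
      case True then show ?thesis using sumi bud by simp
    next
      case False
      show ?thesis
      proof (cases "j = h")
        case True
        have "0 \<le> s h g' * c" using s_pos c0 by (simp add: less_imp_le)
        then show ?thesis using True sumh xb[rule_format, of h] unfolding feasible_bundle_def by simp
      next
        case False
        then show ?thesis using \<open>j \<noteq> i\<close> xb[rule_format, of j] unfolding feasible_bundle_def x'_def by simp
      qed
    qed
    then show ?thesis using nn le1 unfolding feasible_bundle_def by auto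
  qed
  have feas: "feasible_allocation s B x'" using alloc fb unfolding feasible_allocation_def by auto
  have vali: "val v i (x' i) = val v i (x i) - (\<Sum>g\<in>UNIV. a g * v i g) + c * v i g'"
    unfolding val_def
    by (simp add: xi distrib_right left_diff_distrib sum.distrib sum_subtractf se2)
  have valh: "val v h (x' h) = val v h (x h) - c * v h g'"
    unfolding val_def
    by (simp add: xh left_diff_distrib sum_subtractf se2)
  have "(\<Sum>j\<in>UNIV. w j * val v j (x' j)) = (\<Sum>j\<in>UNIV. w j * val v j (x j)
      + (if j = i then w i * (c * v i g' - (\<Sum>g\<in>UNIV. a g * v i g)) else 0)
      + (if j = h then - (w h * (c * v h g')) else 0))"
  proof (rule sum.cong[OF refl])
    fix j
    show "w j * val v j (x' j) = w j * val v j (x j)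
      + (if j = i then w i * (c * v i g' - (\<Sum>g\<in>UNIV. a g * v i g)) else 0)
      + (if j = h then - (w h * (c * v h g')) else 0)"
    proof (cases "j = i")
      case True
      have "w i * val v i (x' i) = w i * val v i (x i) + w i * (c * v i g' - (\<Sum>g\<in>UNIV. a g * v i g))"
        unfolding vali by (simp add: algebra_simps)
      then show ?thesis using True ih by simp
    next
      case False
      then show ?thesis
      proof (cases "j = h")
        case True
        have "w h * val v h (x' h) = w h * val v h (x h) - w h * (c * v h g')"
          unfolding valh by (simp add: algebra_simps)
        then show ?thesis using True ih by simp
      next
        case False then show ?thesis using \<open>j \<noteq> i\<close> by (simp add: x'_def)
      qed
    qed
  qed
  also have "\<dots> = (\<Sum>j\<in>UNIV. w j * val v j (x j)) + w i * (c * v i g' - (\<Sum>g\<in>UNIV. a g * v i g))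
      - w h * (c * v h g')"
    by (simp add: sum.distrib)
  finally show ?thesis using x_opt feas by force
qed


theorem lemma3:
  fixes v s :: "'a::finite \<Rightarrow> 'g::finite \<Rightarrow> real"
    and B w :: "'a \<Rightarrow> real"
    and x :: "'a \<Rightarrow> 'g \<Rightarrow> real"
    and \<gamma> :: real
    and i h :: 'a
  assumes v_nonneg: "\<forall>i g. 0 \<le> v i g"
    and s_pos: "\<forall>i g. 0 < s i g"
    and gamma_pos: "0 < \<gamma>"
    and cond1: "\<gamma> \<le> 1/2"
    and cond2: "\<forall>i h g. \<gamma> < v i g / v h g"
    and cond3: "\<forall>i h g g'. density v s i g' > density v s i g \<longrightarrow>
                  \<gamma> < (1/2) * ((v i g' - v i g * s i g' / s i g) / v h g')"
    and w_pos: "\<forall>j. 0 < w j"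
    and x_feas: "feasible_allocation s B x"
    and x_opt: "\<forall>x'. feasible_allocation s B x' \<longrightarrow>
                  (\<Sum>j\<in>UNIV. w j * val v j (x' j)) \<le> (\<Sum>j\<in>UNIV. w j * val v j (x j))"
    and w_hi: "w h \<le> \<gamma> * w i"
  shows "\<not> envies v s B x i h"
proof
  assume "envies v s B x i h"
  then obtain y where yx: "\<forall>g. y g \<le> x h g" and yf: "feasible_bundle s B i y"
    and yv: "val v i y > val v i (x i)" unfolding envies_def by blast
  have wi: "0 < w i" and wh: "0 < w h" using w_pos by auto
  have ih: "i \<noteq> h"
  proof
    assume "i = h"
    then have "w i \<le> \<gamma> * w i" using w_hi by simp
    also have "\<dots> \<le> (1/2) * w i" using cond1 wi by (intro mult_right_mono) auto
    finally show False using wi by simp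
  qed
  have vpos: "0 < v j g" for j g
  proof -
    have "v j g \<noteq> 0"
    proof
      assume "v j g = 0"
      then show False using cond2[rule_format, of j g j] gamma_pos by simp
    qed
    then show ?thesis using v_nonneg[rule_format, of j g] by linarith
  qed
  have sp: "0 < s j g" for j g using s_pos by auto
  have xa: "is_allocation x" and xb: "\<forall>j. feasible_bundle s B j (x j)"
    using x_feas unfolding feasible_allocation_def by auto
  have x0: "0 \<le> x j g" for j g using xa unfolding is_allocation_def by auto
  have y0: "0 \<le> y g" for g using yf unfolding feasible_bundle_def by auto
  define \<rho> where "\<rho> g = density v s i g" for g
  have vrho: "v i g = \<rho> g * s i g" for g
    using sp[of i g] by (simp add: \<rho>_def density_def)
  have rho0: "0 \<le> \<rho> g" for g
    using sp[of i g] vpos[of i g] by (simp add: \<rho>_def density_def)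

  have A: "\<rho> g' \<le> \<rho> g" if xg: "0 < x i g" and yg: "0 < y g'" for g g'
  proof (rule ccontr)
    assume "\<not> \<rho> g' \<le> \<rho> g"
    then have dens: "density v s i g' > density v s i g" by (simp add: \<rho>_def)
    define D where "D = v i g' - v i g * s i g' / s i g"
    have c3: "\<gamma> < (1/2) * (D / v h g')" using cond3 dens unfolding D_def by blast
    define c where "c = min (x h g') (x i g * s i g / s i g')"
    define \<delta> where "\<delta> = c * s i g' / s i g"
    define a where "a = (\<lambda>k. if k = g then \<delta> else 0)"
    have cpos: "0 < c" using yg yx[rule_format, of g'] xg sp[of i g] sp[of i g']
      unfolding c_def by auto
    have cx: "c \<le> x h g'" unfolding c_def by simp
    have d0: "0 \<le> \<delta>" using cpos sp[of i g] sp[of i g'] unfolding \<delta>_def by simp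
    have dx: "\<delta> \<le> x i g"
    proof -
      have "c \<le> x i g * s i g / s i g'" unfolding c_def by simp
      then have "c * s i g' \<le> x i g * s i g" using sp[of i g'] by (simp add: pos_le_divide_eq)
      then show ?thesis unfolding \<delta>_def using sp[of i g] by (simp add: pos_divide_le_eq)
    qed
    have a0: "\<forall>k. 0 \<le> a k" using d0 unfolding a_def by auto
    have ax: "\<forall>k. a k \<le> x i k" using dx x0 unfolding a_def by auto
    have sa: "(\<Sum>k\<in>UNIV. f k * a k) = f g * \<delta>" for f :: "'g \<Rightarrow> real"
    proof -
      have "(\<Sum>k\<in>UNIV. f k * a k) = (\<Sum>k\<in>UNIV. if k = g then f g * \<delta> else 0)"
        by (rule sum.cong) (auto simp: a_def)
      then show ?thesis by simp
    qed
    have "s i g * \<delta> = s i g' * c" unfolding \<delta>_def using sp[of i g] by simp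
    then have bud: "(\<Sum>k\<in>UNIV. s i k * (x i k - a k)) + s i g' * c \<le> B i"
      using xb[rule_format, of i] sa[of "s i"]
      by (simp add: right_diff_distrib sum_subtractf feasible_bundle_def)
    have "w i * (c * v i g' - (\<Sum>k\<in>UNIV. a k * v i k)) - w h * (c * v h g') \<le> 0"
      by (rule perturb[OF s_pos x_feas x_opt ih a0 ax less_imp_le[OF cpos] cx bud])
    moreover have "(\<Sum>k\<in>UNIV. a k * v i k) = v i g * \<delta>"
      using sa[of "v i"] by (simp add: mult.commute)
    moreover have "c * v i g' - v i g * \<delta> = c * D"
      unfolding D_def \<delta>_def by (simp add: algebra_simps)
    ultimately have e1: "w i * (c * D) \<le> w h * (c * v h g')" by simp
    have vh: "0 < v h g'" by (rule vpos)
    have "2 * \<gamma> * v h g' < D" using c3 vh by (simp add: field_simps)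
    then have e2: "2 * \<gamma> * (w i * c * v h g') < w i * c * D"
      using wi cpos by (smt (verit) mult_strict_left_mono mult.assoc mult.commute mult_pos_pos)
    have e3: "w h * (c * v h g') \<le> \<gamma> * w i * (c * v h g')"
      using w_hi cpos vh by (intro mult_right_mono) auto
    have "0 < \<gamma> * (w i * c * v h g')" using gamma_pos wi cpos vh by simp
    then show False using e1 e2 e3 by (simp add: algebra_simps)
  qed

  obtain g0 where yg0: "0 < y g0"
  proof (rule ccontr)
    assume "\<not> thesis"
    then have "\<forall>g. y g \<le> 0" using that by (meson not_less)
    then have "\<forall>g. y g = 0" using y0 by (meson antisym)
    then have "val v i y = 0" unfolding val_def by simp
    moreover have "0 \<le> val v i (x i)" unfolding val_def using x0 v_nonneg
      by (intro sum_nonneg) simp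
    ultimately show False using yv by simp
  qed

  have Bt: "B i \<le> (\<Sum>g\<in>UNIV. s i g * x i g)"
  proof (rule ccontr)
    assume nb: "\<not> B i \<le> (\<Sum>g\<in>UNIV. s i g * x i g)"
    define sl where "sl = B i - (\<Sum>g\<in>UNIV. s i g * x i g)"
    have slp: "0 < sl" using nb unfolding sl_def by simp
    define c where "c = min (x h g0) (sl / s i g0)"
    have cpos: "0 < c" using yg0 yx[rule_format, of g0] slp sp[of i g0] unfolding c_def by auto
    have cx: "c \<le> x h g0" unfolding c_def by simp
    have "c \<le> sl / s i g0" unfolding c_def by simp
    then have "s i g0 * c \<le> sl" using sp[of i g0] by (simp add: pos_le_divide_eq mult.commute)
    then have bud: "(\<Sum>k\<in>UNIV. s i k * (x i k - 0)) + s i g0 * c \<le> B i" unfolding sl_def by simp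
    have "w i * (c * v i g0 - (\<Sum>k\<in>UNIV. 0 * v i k)) - w h * (c * v h g0) \<le> 0"
      by (rule perturb[OF s_pos x_feas x_opt ih _ _ less_imp_le[OF cpos] cx]) (use bud x0 in auto)
    then have e1: "w i * (c * v i g0) \<le> w h * (c * v h g0)" by simp
    have vh: "0 < v h g0" by (rule vpos)
    have "\<gamma> * v h g0 < v i g0" using cond2[rule_format, of i g0 h] vh by (simp add: field_simps)
    then have e2: "\<gamma> * (w i * c * v h g0) < w i * c * v i g0"
      using wi cpos by (smt (verit) mult_strict_left_mono mult.assoc mult.commute mult_pos_pos)
    have e3: "w h * (c * v h g0) \<le> \<gamma> * w i * (c * v h g0)"
      using w_hi cpos vh by (intro mult_right_mono) auto
    show False using e1 e2 e3 by (simp add: algebra_simps)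
  qed

  define P where "P = {g. 0 < y g}"
  define r where "r = Max (\<rho> ` P)"
  have Pne: "P \<noteq> {}" using yg0 unfolding P_def by auto
  have rge: "\<rho> g \<le> r" if "g \<in> P" for g unfolding r_def using that by simp
  obtain g1 where g1: "g1 \<in> P" "r = \<rho> g1"
  proof -
    have "r \<in> \<rho> ` P" unfolding r_def using Pne by (intro Max_in) auto
    then show ?thesis using that by blast
  qed
  have r0: "0 \<le> r" using g1 rho0 by simp
  have "val v i y = (\<Sum>g\<in>UNIV. y g * v i g)" unfolding val_def by simp
  also have "\<dots> \<le> (\<Sum>g\<in>UNIV. r * (s i g * y g))"
  proof (rule sum_mono)
    fix g
    show "y g * v i g \<le> r * (s i g * y g)"
    proof (cases "0 < y g")
      case True
      then have "\<rho> g \<le> r" using rge P_def by simp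
      then have "\<rho> g * s i g * y g \<le> r * s i g * y g"
        using True sp[of i g] by (intro mult_right_mono) auto
      then show ?thesis by (simp add: vrho algebra_simps)
    next
      case False
      then show ?thesis using y0[of g] by simp
    qed
  qed
  also have "\<dots> = r * (\<Sum>g\<in>UNIV. s i g * y g)" by (simp add: sum_distrib_left)
  also have "\<dots> \<le> r * B i" using yf r0 unfolding feasible_bundle_def by (intro mult_left_mono) auto
  also have "\<dots> \<le> r * (\<Sum>g\<in>UNIV. s i g * x i g)" using Bt r0 by (intro mult_left_mono) auto
  also have "\<dots> = (\<Sum>g\<in>UNIV. r * (s i g * x i g))" by (simp add: sum_distrib_left)
  also have "\<dots> \<le> (\<Sum>g\<in>UNIV. x i g * v i g)"
  proof (rule sum_mono)
    fix g
    show "r * (s i g * x i g) \<le> x i g * v i g"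
    proof (cases "0 < x i g")
      case True
      then have "r \<le> \<rho> g" using A[of g g1] g1 P_def by simp
      then have "r * s i g * x i g \<le> \<rho> g * s i g * x i g"
        using True sp[of i g] by (intro mult_right_mono) auto
      then show ?thesis by (simp add: vrho algebra_simps)
    next
      case False
      then show ?thesis using x0[of i g] by simp
    qed
  qed
  also have "\<dots> = val v i (x i)" unfolding val_def by simp
  finally show False using yv by simp
qed

end
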